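(* Let $q>0$ with $q(2s-1)<2s+1$, $\lambda>0$ and $f_1,f_2\in L^\infty(\Omega)$. Let $u,v\in X_0(\Omega)\cap\mathcal C\cap C_0(\overline\Omega)$ be the weak solutions of $u+\lambda L(u)=f_1$ and $v+\lambda L(v)=f_2$ in $\Omega$ (with $u=v=0$ in $\mathbb R^n\setminus\Omega$), where $L(w)=(-\Delta)^s w-w^{-q}$. Then $\|u-v\|_{L^\infty(\Omega)}\le\|f_1-f_2\|_{L^\infty(\Omega)}$.
   Context: $s\in(0,1)$, $n>2s$, $\Omega\subset\mathbb R^n$ bounded with $C^2$ boundary, $\delta(x)=\mathrm{dist}(x,\partial\Omega)$, $C_0(\overline\Omega)=\{u\in C(\overline\Omega):u=0\text{ on }\partial\Omega\}$. $(-\Delta)^s u(x)=2C_n^s\,\mathrm{P.V.}\int_{\mathbb R^n}\frac{u(x)-u(y)}{|x-y|^{n+2s}}dy$, $C_n^s=\pi^{-n/2}2^{2s-1}s\,\Gamma(\frac{n+2s}{2})/\Gamma(1-s)$; $Q=\mathbb R^{2n}\setminus((\mathbb R^n\setminus\Omega)^2)$; $X_0(\Omega)$ is the Hilbert space of measurable $u$ on $\mathbb R^n$ vanishing a.e. outside $\Omega$, $u\in L^2(\Omega)$, $\|u\|_{X_0}^2=C_n^s\int_Q\frac{|u(x)-u(y)|^2}{|x-y|^{n+2s}}<\infty$. Fix $r>\mathrm{diam}\,\Omega$; $\mathcal C$ is the set of $v\in L^\infty(\Omega)$ with constants $k_1,k_2>0$ such that $k_1\delta^s\le v\le k_2\delta^s$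 if $q<1$; $k_1\delta^s(\ln(r/\delta^s))^{1/2}\le v\le k_2\delta^s(\ln(r/\delta^s))^{1/2}$ if $q=1$; $k_1\delta^{2s/(q+1)}\le v\le k_2\delta^{2s/(q+1)}$ if $q>1$. Weak solution of $u+\lambda L(u)=f$: $u\in X_0(\Omega)$, $\operatorname{ess\,inf}_Ku>0$ on compacts $K\subset\Omega$, and $\int_\Omega u\phi+\lambda(C_n^s\int_Q\frac{(u(x)-u(y))(\phi(x)-\phi(y))}{|x-y|^{n+2s}}-\int_\Omega u^{-q}\phi)=\int_\Omega f\phi$ for all $\phi\in X_0(\Omega)$. *)

theory Defs
  imports "HOL-Analysis.Analysis"
begin

text \<open>Dimension n is DIM('a) for an abstract Euclidean space 'a.\<close>

definition C2_on :: "'a::euclidean_space set \<Rightarrow> ('a \<Rightarrow> real) \<Rightarrow> bool" where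
  "C2_on S f \<longleftrightarrow> (\<exists>G :: 'a \<Rightarrow> 'a. \<exists>H :: 'a \<Rightarrow> ('a \<Rightarrow>\<^sub>L 'a).
      (\<forall>x\<in>S. (f has_derivative (\<lambda>h. G x \<bullet> h)) (at x)) \<and>
      (\<forall>x\<in>S. (G has_derivative blinfun_apply (H x)) (at x)) \<and>
      continuous_on S H)"

definition C2_boundary :: "'a::euclidean_space set \<Rightarrow> bool" where
  "C2_boundary \<Omega> \<longleftrightarrow> (\<exists>U \<rho>. open U \<and> frontier \<Omega> \<subseteq> U \<and> C2_on U \<rho> \<and>
      \<Omega> \<inter> U = {x\<in>U. \<rho> x < 0} \<and>
      (\<forall>x\<in>frontier \<Omega>. \<rho> x = 0 \<and> \<not> (\<rho> has_derivative (\<lambda>h. 0)) (at x)))"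

definition dist_bd :: "'a::euclidean_space set \<Rightarrow> 'a \<Rightarrow> real" where
  "dist_bd \<Omega> x = infdist x (frontier \<Omega>)"

definition frac_const :: "nat \<Rightarrow> real \<Rightarrow> real" where
  "frac_const n s = pi powr (- real n / 2) * 2 powr (2 * s - 1) * s
      * Gamma ((real n + 2 * s) / 2) / Gamma (1 - s)"

definition Qset :: "'a set \<Rightarrow> ('a \<times> 'a) set" where
  "Qset \<Omega> = UNIV - (-\<Omega>) \<times> (-\<Omega>)"

definition X0 :: "real \<Rightarrow> 'a::euclidean_space set \<Rightarrow> ('a \<Rightarrow> real) set" where
  "X0 s \<Omega> = {u. u \<in> borel_measurable lebesgue \<and>
      (AE x in lebesgue. x \<notin> \<Omega> \<longrightarrow> u x = 0) \<and>
      (\<integral>\<^sup>+ x. indicator \<Omega> x * ennreal ((u x)\<^sup>2) \<partial>lebesgue) < \<infinity> \<and>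
      (\<integral>\<^sup>+ z. indicator (Qset \<Omega>) z *
          ennreal ((u (fst z) - u (snd z))\<^sup>2 / norm (fst z - snd z) powr (real DIM('a) + 2 * s))
         \<partial>(lebesgue \<Otimes>\<^sub>M lebesgue)) < \<infinity>}"

definition Linf :: "'a::euclidean_space set \<Rightarrow> ('a \<Rightarrow> real) set" where
  "Linf \<Omega> = {u. u \<in> borel_measurable lebesgue \<and>
      (\<exists>C. AE x in lebesgue. x \<in> \<Omega> \<longrightarrow> \<bar>u x\<bar> \<le> C)}"

definition Linf_norm :: "'a::euclidean_space set \<Rightarrow> ('a \<Rightarrow> real) \<Rightarrow> real" where
  "Linf_norm \<Omega> u = Inf {C. 0 \<le> C \<and> (AE x in lebesgue. x \<in> \<Omega> \<longrightarrow> \<bar>u x\<bar> \<le> C)}"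

definition C0_closure :: "'a::euclidean_space set \<Rightarrow> ('a \<Rightarrow> real) set" where
  "C0_closure \<Omega> = {u. continuous_on (closure \<Omega>) u \<and> (\<forall>x\<in>frontier \<Omega>. u x = 0)}"

text \<open>The class \<C> (depends on s, q and the fixed r > diam \<Omega>).\<close>
definition profile :: "real \<Rightarrow> real \<Rightarrow> real \<Rightarrow> real \<Rightarrow> real" where
  "profile s q r d =
     (if q < 1 then d powr s
      else if q = 1 then d powr s * sqrt (ln (r / d powr s))
      else d powr (2 * s / (q + 1)))"

definition classC :: "real \<Rightarrow> real \<Rightarrow> real \<Rightarrow> 'a::euclidean_space set \<Rightarrow> ('a \<Rightarrow> real) set" where
  "classC s q r \<Omega> = {v. v \<in> Linf \<Omega> \<and> (\<exists>k1 k2. k1 > 0 \<and> k2 > 0 \<and>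
      (AE x in lebesgue. x \<in> \<Omega> \<longrightarrow>
         k1 * profile s q r (dist_bd \<Omega> x) \<le> v x \<and> v x \<le> k2 * profile s q r (dist_bd \<Omega> x)))}"

text \<open>Weak solution of u + \<lambda>((-\<Delta>)^s u - u^{-q}) = f.  The singular term is required to be
  integrable against every test function so that the weak formulation is meaningful.\<close>
definition weak_solution :: "real \<Rightarrow> real \<Rightarrow> real \<Rightarrow> 'a::euclidean_space set \<Rightarrow> ('a \<Rightarrow> real)
    \<Rightarrow> ('a \<Rightarrow> real) \<Rightarrow> bool" where
  "weak_solution s q lam \<Omega> f u \<longleftrightarrow> u \<in> X0 s \<Omega> \<and>
     (\<forall>K. compact K \<and> K \<subseteq> \<Omega> \<longrightarrow> (\<exists>c>0. AE x in lebesgue. x \<in> K \<longrightarrow> c \<le> u x)) \<and>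
     (\<forall>\<phi> \<in> X0 s \<Omega>.
        set_integrable lebesgue \<Omega> (\<lambda>x. u x powr (-q) * \<phi> x) \<and>
        (LINT x:\<Omega>|lebesgue. u x * \<phi> x)
        + lam * (frac_const DIM('a) s *
              (LINT z:Qset \<Omega>|(lebesgue \<Otimes>\<^sub>M lebesgue).
                 (u (fst z) - u (snd z)) * (\<phi> (fst z) - \<phi> (snd z))
                 / norm (fst z - snd z) powr (real DIM('a) + 2 * s))
            - (LINT x:\<Omega>|lebesgue. u x powr (-q) * \<phi> x))
        = (LINT x:\<Omega>|lebesgue. f x * \<phi> x))"

end

theory Submission
  imports Defs
begin


lemma fst_meas: "(fst :: 'a::euclidean_space \<times> 'a \<Rightarrow> 'a) \<in> borel_measurable (lebesgue \<Otimes>\<^sub>M lebesgue)"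
proof -
  have "(\<lambda>x::'a. x) \<in> borel_measurable lebesgue" by (rule measurable_completion) simp
  then show ?thesis by (rule measurable_compose[OF measurable_fst])
qed
lemma snd_meas: "(snd :: 'a::euclidean_space \<times> 'a \<Rightarrow> 'a) \<in> borel_measurable (lebesgue \<Otimes>\<^sub>M lebesgue)"
proof -
  have "(\<lambda>x::'a. x) \<in> borel_measurable lebesgue" by (rule measurable_completion) simp
  then show ?thesis by (rule measurable_compose[OF measurable_snd])
qed
lemma K_meas: "(\<lambda>z::'a::euclidean_space \<times> 'a. norm (fst z - snd z) powr p) \<in> borel_measurable (lebesgue \<Otimes>\<^sub>M lebesgue)"
  using fst_meas snd_meas by measurable
lemma Q_sets: "open \<Omega> \<Longrightarrow> Qset (\<Omega>::'a::euclidean_space set) \<in> sets (lebesgue \<Otimes>\<^sub>M lebesgue)"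
  unfolding Qset_def
  apply (rule sets.compl_sets[of _ "lebesgue \<Otimes>\<^sub>M lebesgue", simplified space_pair_measure, simplified])
  apply (rule pair_measureI)
  by (auto intro!: sets_completionI_sets borel_closed)

lemma comp_fst_meas: "u \<in> borel_measurable lebesgue \<Longrightarrow> (\<lambda>z. u (fst z)) \<in> borel_measurable (lebesgue \<Otimes>\<^sub>M lebesgue)"
  by (rule measurable_compose[OF measurable_fst])
lemma comp_snd_meas: "u \<in> borel_measurable lebesgue \<Longrightarrow> (\<lambda>z. u (snd z)) \<in> borel_measurable (lebesgue \<Otimes>\<^sub>M lebesgue)"
  by (rule measurable_compose[OF measurable_snd])

lemma nn_to_set_int:
  fixes f :: "_ \<Rightarrow> real"
  assumes "A \<in> sets M" "f \<in> borel_measurable M" "\<And>x. 0 \<le> f x"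
    "(\<integral>\<^sup>+x. indicator A x * ennreal (f x) \<partial>M) < \<infinity>"
  shows "set_integrable M A f"
  unfolding set_integrable_def
proof (rule integrableI_bounded)
  show "(\<lambda>x. indicat_real A x *\<^sub>R f x) \<in> borel_measurable M" using assms by measurable
  have "(\<integral>\<^sup>+ x. ennreal (norm (indicat_real A x *\<^sub>R f x)) \<partial>M) = (\<integral>\<^sup>+x. indicator A x * ennreal (f x) \<partial>M)"
    using assms(3) by (intro nn_integral_cong) (auto split: split_indicator)
  then show "(\<integral>\<^sup>+ x. ennreal (norm (indicat_real A x *\<^sub>R f x)) \<partial>M) < \<infinity>" using assms(4) by simp
qed

lemma set_int_to_nn:
  fixes f :: "_ \<Rightarrow> real"
  assumes "set_integrable M A f" "\<And>x. 0 \<le> f x"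
  shows "(\<integral>\<^sup>+x. indicator A x * ennreal (f x) \<partial>M) < \<infinity>"
proof -
  have "(\<integral>\<^sup>+ x. ennreal (norm (indicat_real A x *\<^sub>R f x)) \<partial>M) < \<infinity>"
    using assms(1) unfolding set_integrable_def integrable_iff_bounded by blast
  moreover have "(\<integral>\<^sup>+ x. ennreal (norm (indicat_real A x *\<^sub>R f x)) \<partial>M) = (\<integral>\<^sup>+x. indicator A x * ennreal (f x) \<partial>M)"
    using assms(2) by (intro nn_integral_cong) (auto split: split_indicator)
  ultimately show ?thesis by simp
qed

lemma set_int_bound2:
  fixes h ga gb :: "_ \<Rightarrow> real"
  assumes "A \<in> sets M" "set_integrable M A ga" "set_integrable M A gb" "h \<in> borel_measurable M"
    "AE x in M. x \<in> A \<longrightarrow> \<bar>h x\<bar> \<le> ga x + gb x"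
  shows "set_integrable M A h"
proof (rule set_integrable_bound[of M A "\<lambda>x. ga x + gb x"])
  show "set_integrable M A (\<lambda>x. ga x + gb x)" using assms by auto
  show "set_borel_measurable M A h" unfolding set_borel_measurable_def using assms by measurable
  show "AE x in M. x \<in> A \<longrightarrow> norm (h x) \<le> norm (ga x + gb x)" using assms(5) by eventually_elim auto
qed

lemma prod_bound: "\<bar>(a::real) * b / d\<bar> \<le> a^2 / d + b^2 / d" if "d \<ge> 0"
proof (cases "d = 0")
  case False
  have "0 \<le> (\<bar>a\<bar> - \<bar>b\<bar>)^2" by simp
  hence "2*(\<bar>a\<bar>*\<bar>b\<bar>) \<le> a^2 + b^2" by (simp add: power2_diff)
  moreover have "0 \<le> \<bar>a\<bar>*\<bar>b\<bar>" by simp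
  moreover have "\<bar>a*b\<bar> = \<bar>a\<bar>*\<bar>b\<bar>" by (rule abs_mult)
  ultimately have h: "\<bar>a*b\<bar> \<le> a^2 + b^2" by linarith
  have "\<bar>a * b / d\<bar> = \<bar>a*b\<bar> / d" using that by (simp add: abs_div_pos)
  also have "\<dots> \<le> (a^2 + b^2) / d" using h that by (rule divide_right_mono)
  also have "\<dots> = a^2 / d + b^2 / d" by (rule add_divide_distrib)
  finally show ?thesis .
qed simp



lemma recip_aux: "1 / d < (N::real) \<Longrightarrow> 0 < N \<Longrightarrow> 0 < d \<Longrightarrow> 1 / N \<le> d"
proof -
  assume a: "1 / d < N" "0 < N" "0 < d"
  then have "1 < N * d" by (simp add: divide_less_eq)
  then show "1 / N \<le> d" using a(2) by (simp add: divide_le_eq mult.commute)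
qed

lemma pos_ae:
  fixes \<Omega> :: "'a::euclidean_space set" and v :: "'a \<Rightarrow> real"
  assumes "open \<Omega>" "bounded \<Omega>"
    and K: "\<forall>K. compact K \<and> K \<subseteq> \<Omega> \<longrightarrow> (\<exists>c>0. AE x in lebesgue. x \<in> K \<longrightarrow> c \<le> v x)"
  shows "AE x in lebesgue. x \<in> \<Omega> \<longrightarrow> 0 < v x"
proof -
  define Kn where "Kn n = {x. 1 / real (Suc n) \<le> infdist x (-\<Omega>)} \<inter> cball (0::'a) (real n)" for n
  have cK: "compact (Kn n)" for n
  proof -
    have "closed {x. 1 / real (Suc n) \<le> infdist x (-\<Omega>)}"
      by (intro closed_Collect_le continuous_intros continuous_on_infdist) auto
    then show ?thesis unfolding Kn_def by (simp add: compact_Int_closed Int_commute)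
  qed
  have sK: "Kn n \<subseteq> \<Omega>" for n
  proof
    fix x assume "x \<in> Kn n"
    hence "1 / real (Suc n) \<le> infdist x (-\<Omega>)" unfolding Kn_def by auto
    moreover have "0 < 1 / real (Suc n)" by simp
    ultimately show "x \<in> \<Omega>" by (metis ComplI infdist_zero not_le)
  qed
  have ex: "\<forall>n. \<exists>c. c > 0 \<and> (AE x in lebesgue. x \<in> Kn n \<longrightarrow> c \<le> v x)"
  proof
    fix n show "\<exists>c. c > 0 \<and> (AE x in lebesgue. x \<in> Kn n \<longrightarrow> c \<le> v x)"
      using K[rule_format, OF conjI[OF cK sK]] by blast
  qed
  obtain c where c0: "\<forall>n. c n > 0 \<and> (AE x in lebesgue. x \<in> Kn n \<longrightarrow> c n \<le> v x)"
    using choice[OF ex] by blast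
  have c: "\<And>n. c n > 0" "\<And>n. AE x in lebesgue. x \<in> Kn n \<longrightarrow> c n \<le> v x" using c0 by auto
  have "AE x in lebesgue. \<forall>n. x \<in> Kn n \<longrightarrow> c n \<le> v x" using c(2) by (simp add: AE_all_countable)
  then show ?thesis
  proof eventually_elim
    case (elim x)
    show ?case
    proof
      assume xO: "x \<in> \<Omega>"
      have ne: "-\<Omega> \<noteq> {}" using assms(2) not_bounded_UNIV by (metis Compl_empty_eq double_compl)
      have d: "infdist x (-\<Omega>) > 0"
        by (rule infdist_pos_not_in_closed) (use assms(1) ne xO in auto)
      obtain n :: nat where n: "real n > max (norm x) (1 / infdist x (-\<Omega>))" using reals_Archimedean2 by blast
      have "1 / infdist x (-\<Omega>) < real (Suc n)" using n by auto
      hence "1 / real (Suc n) \<le> infdist x (-\<Omega>)"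
        by (rule recip_aux[OF _ _ d]) simp
      moreover have "x \<in> cball 0 (real n)" using n by auto
      ultimately have "x \<in> Kn n" unfolding Kn_def by auto
      then have "c n \<le> v x" using elim by blast
      then show "0 < v x" using c(1)[of n] by linarith
    qed
  qed
qed

lemma frac_const_nonneg: "0 < s \<Longrightarrow> s < 1 \<Longrightarrow> 0 \<le> frac_const n s"
  unfolding frac_const_def by (intro mult_nonneg_nonneg divide_nonneg_pos less_imp_le[OF Gamma_real_pos]) auto



lemma sq_bound: "\<bar>w::real\<bar> \<le> \<bar>a - b\<bar> \<Longrightarrow> w^2 \<le> 2*a^2 + 2*b^2"
proof -
  assume h: "\<bar>w\<bar> \<le> \<bar>a - b\<bar>"
  have "w^2 = \<bar>w\<bar>^2" by simp
  also have "\<dots> \<le> \<bar>a-b\<bar>^2" by (rule power_mono) (use h in auto)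
  also have "\<dots> = (a-b)^2" by simp
  also have "\<dots> = 2*a^2+2*b^2 - (a+b)^2" by (simp add: power2_eq_square algebra_simps)
  also have "\<dots> \<le> 2*a^2+2*b^2" by simp
  finally show ?thesis .
qed

lemma prod_bound1: "\<bar>(a::real) * b\<bar> \<le> a^2 + b^2"
  using prod_bound[of 1 a b] by simp

lemma abs_le_1_sq: "\<bar>w::real\<bar> \<le> 1 + w^2"
proof (cases "\<bar>w\<bar> \<le> 1")
  case False
  then have "\<bar>w\<bar> * 1 \<le> \<bar>w\<bar> * \<bar>w\<bar>" by (intro mult_left_mono) auto
  then show ?thesis by (simp add: power2_eq_square)
qed (simp add: add_increasing2)

lemma max_lip: "\<bar>max 0 (p - C) - max 0 (r - C)\<bar> \<le> \<bar>(p::real) - r\<bar>"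
  by (simp add: max_def abs_if)

lemma mono_aux:
  fixes d u1 u2 v1 v2 C :: real
  assumes "0 \<le> d"
  shows "(v1 - v2) * (max 0 (u1 - v1 - C) - max 0 (u2 - v2 - C)) / d
       \<le> (u1 - u2) * (max 0 (u1 - v1 - C) - max 0 (u2 - v2 - C)) / d"
proof -
  define t where "t = max 0 (u1 - v1 - C) - max 0 (u2 - v2 - C)"
  have "0 \<le> ((u1 - v1) - (u2 - v2)) * t"
  proof (cases "u1 - v1 \<le> u2 - v2")
    case True
    then have "t \<le> 0" unfolding t_def by (simp add: max_def)
    then show ?thesis using True by (intro mult_nonpos_nonpos) auto
  next
    case False
    then have "t \<ge> 0" unfolding t_def by (simp add: max_def)
    then show ?thesis using False by (intro mult_nonneg_nonneg) auto
  qed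
  then have "(v1 - v2) * t \<le> (u1 - u2) * t" by (simp add: algebra_simps)
  then show ?thesis unfolding t_def[symmetric] using assms by (rule divide_right_mono)
qed

lemma powr_aux:
  fixes u v q C :: real
  assumes "0 < v" "0 \<le> C" "0 < q"
  shows "u powr (-q) * max 0 (u - v - C) \<le> v powr (-q) * max 0 (u - v - C)"
proof (cases "u - v - C \<le> 0")
  case False
  then have "v \<le> u" using assms by simp
  then have "u powr (-q) \<le> v powr (-q)" using assms by (intro powr_mono2') auto
  then show ?thesis by (intro mult_right_mono) auto
qed simp

lemma sq_aux: "(u::real) * max 0 (u - v - C) - v * max 0 (u - v - C) - C * max 0 (u - v - C) = (max 0 (u - v - C))^2"
proof -
  have "u * max 0 (u - v - C) - v * max 0 (u - v - C) - C * max 0 (u - v - C) = (u - v - C) * max 0 (u - v - C)"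
    by (simp add: algebra_simps)
  also have "\<dots> = (max 0 (u - v - C))^2"
    by (cases "u - v - C \<le> 0") (simp_all add: max_def power2_eq_square)
  finally show ?thesis .
qed

lemma one_side:
  fixes \<Omega> :: "'a::euclidean_space set" and s q lam C :: real and f1 f2 u v :: "'a \<Rightarrow> real"
  assumes s: "0 < s" "s < 1" and q: "0 < q" and o\<Omega>: "open \<Omega>" and b\<Omega>: "bounded \<Omega>" and lam: "lam > 0"
   and f1: "f1 \<in> Linf \<Omega>" and f2: "f2 \<in> Linf \<Omega>"
   and wu: "weak_solution s q lam \<Omega> f1 u" and wv: "weak_solution s q lam \<Omega> f2 v"
   and C: "0 \<le> C" "AE x in lebesgue. x \<in> \<Omega> \<longrightarrow> \<bar>f1 x - f2 x\<bar> \<le> C"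
  shows "AE x in lebesgue. x \<in> \<Omega> \<longrightarrow> u x - v x \<le> C"
proof -
  have uX: "u \<in> X0 s \<Omega>" and vX: "v \<in> X0 s \<Omega>" using wu wv unfolding weak_solution_def by auto
  have vpos: "AE x in lebesgue. x \<in> \<Omega> \<longrightarrow> 0 < v x"
    using pos_ae[OF o\<Omega> b\<Omega>] wv unfolding weak_solution_def by blast
  have \<Omega>s: "\<Omega> \<in> sets lebesgue" using o\<Omega> by (auto intro!: sets_completionI_sets borel_open)
  have Qs: "Qset \<Omega> \<in> sets (lebesgue \<Otimes>\<^sub>M lebesgue)" by (rule Q_sets[OF o\<Omega>])
  define D where "D z = norm (fst z - snd z) powr (real DIM('a) + 2 * s)" for z :: "'a \<times> 'a"
  have Dm: "D \<in> borel_measurable (lebesgue \<Otimes>\<^sub>M lebesgue)" unfolding D_def by (rule K_meas)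
  have D0: "0 \<le> D z" for z unfolding D_def by simp
  define W where "W x = max 0 (u x - v x - C)" for x
  have um: "u \<in> borel_measurable lebesgue" using uX unfolding X0_def by auto
  have vm: "v \<in> borel_measurable lebesgue" using vX unfolding X0_def by auto
  have Wm: "W \<in> borel_measurable lebesgue" unfolding W_def using um vm by measurable
  have u2: "set_integrable lebesgue \<Omega> (\<lambda>x. (u x)^2)"
    apply (rule nn_to_set_int[OF \<Omega>s]) using um apply measurable apply simp
    using uX unfolding X0_def by auto
  have v2: "set_integrable lebesgue \<Omega> (\<lambda>x. (v x)^2)"
    apply (rule nn_to_set_int[OF \<Omega>s]) using vm apply measurable apply simp
    using vX unfolding X0_def by auto
  have gu: "set_integrable (lebesgue \<Otimes>\<^sub>M lebesgue) (Qset \<Omega>) (\<lambda>z. (u (fst z) - u (snd z))^2 / D z)"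
    apply (rule nn_to_set_int[OF Qs])
    using comp_fst_meas[OF um] comp_snd_meas[OF um] Dm apply measurable
    using D0 apply simp
    using uX unfolding X0_def D_def by auto
  have gv: "set_integrable (lebesgue \<Otimes>\<^sub>M lebesgue) (Qset \<Omega>) (\<lambda>z. (v (fst z) - v (snd z))^2 / D z)"
    apply (rule nn_to_set_int[OF Qs])
    using comp_fst_meas[OF vm] comp_snd_meas[OF vm] Dm apply measurable
    using D0 apply simp
    using vX unfolding X0_def D_def by auto
  have W2: "set_integrable lebesgue \<Omega> (\<lambda>x. (W x)^2)"
  proof (rule set_int_bound2[OF \<Omega>s, where ga="\<lambda>x. 2*(u x)^2" and gb="\<lambda>x. 2*(v x)^2"])
    show "set_integrable lebesgue \<Omega> (\<lambda>x. 2 * (u x)\<^sup>2)" using u2 by simp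
    show "set_integrable lebesgue \<Omega> (\<lambda>x. 2 * (v x)\<^sup>2)" using v2 by simp
    show "(\<lambda>x. (W x)\<^sup>2) \<in> borel_measurable lebesgue" using Wm by measurable
    have "(W x)\<^sup>2 \<le> 2 * (u x)\<^sup>2 + 2 * (v x)\<^sup>2" for x
      by (rule sq_bound) (use C(1) in \<open>auto simp: W_def max_def\<close>)
    then show "AE x in lebesgue. x \<in> \<Omega> \<longrightarrow> \<bar>(W x)\<^sup>2\<bar> \<le> 2 * (u x)\<^sup>2 + 2 * (v x)\<^sup>2" by simp
  qed
  have gW: "set_integrable (lebesgue \<Otimes>\<^sub>M lebesgue) (Qset \<Omega>) (\<lambda>z. (W (fst z) - W (snd z))^2 / D z)"
  proof (rule set_int_bound2[OF Qs, where ga="\<lambda>z. 2 * ((u (fst z) - u (snd z))^2 / D z)" and gb="\<lambda>z. 2 * ((v (fst z) - v (snd z))^2 / D z)"])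
    show "set_integrable (lebesgue \<Otimes>\<^sub>M lebesgue) (Qset \<Omega>) (\<lambda>z. 2 * ((u (fst z) - u (snd z))^2 / D z))" using gu by (rule set_integrable_mult_right)
    show "set_integrable (lebesgue \<Otimes>\<^sub>M lebesgue) (Qset \<Omega>) (\<lambda>z. 2 * ((v (fst z) - v (snd z))^2 / D z))" using gv by (rule set_integrable_mult_right)
    show "(\<lambda>z. (W (fst z) - W (snd z))^2 / D z) \<in> borel_measurable (lebesgue \<Otimes>\<^sub>M lebesgue)"
      using comp_fst_meas[OF Wm] comp_snd_meas[OF Wm] Dm by measurable
    have "(W (fst z) - W (snd z))^2 / D z \<le> 2 * ((u (fst z) - u (snd z))^2 / D z) + 2 * ((v (fst z) - v (snd z))^2 / D z)" for z
    proof -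
      have "(W (fst z) - W (snd z))^2 \<le> 2 * (u (fst z) - u (snd z))^2 + 2 * (v (fst z) - v (snd z))^2"
        apply (rule sq_bound)
        using max_lip[of "u (fst z) - v (fst z)" C "u (snd z) - v (snd z)"] unfolding W_def
        by (simp add: algebra_simps)
      then have "(W (fst z) - W (snd z))^2 / D z \<le> (2 * (u (fst z) - u (snd z))^2 + 2 * (v (fst z) - v (snd z))^2) / D z"
        using D0 by (rule divide_right_mono)
      then show ?thesis by (simp add: add_divide_distrib)
    qed
    moreover have "0 \<le> (W (fst z) - W (snd z))^2 / D z" for z using D0 by simp
    ultimately show "AE z in lebesgue \<Otimes>\<^sub>M lebesgue. z \<in> Qset \<Omega> \<longrightarrow> \<bar>(W (fst z) - W (snd z))^2 / D z\<bar>
        \<le> 2 * ((u (fst z) - u (snd z))^2 / D z) + 2 * ((v (fst z) - v (snd z))^2 / D z)"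
      by (intro AE_I2 impI) (metis abs_of_nonneg)
  qed
  have WX: "W \<in> X0 s \<Omega>"
    unfolding X0_def
  proof (intro CollectI conjI)
    show "W \<in> borel_measurable lebesgue" by (rule Wm)
    have "AE x in lebesgue. x \<notin> \<Omega> \<longrightarrow> u x = 0" "AE x in lebesgue. x \<notin> \<Omega> \<longrightarrow> v x = 0"
      using uX vX unfolding X0_def by auto
    then show "AE x in lebesgue. x \<notin> \<Omega> \<longrightarrow> W x = 0"
      by eventually_elim (use C(1) in \<open>auto simp: W_def\<close>)
    show "(\<integral>\<^sup>+ x. indicator \<Omega> x * ennreal ((W x)\<^sup>2) \<partial>lebesgue) < \<infinity>"
      by (rule set_int_to_nn[OF W2]) simp
    show "(\<integral>\<^sup>+ z. indicator (Qset \<Omega>) z * ennreal ((W (fst z) - W (snd z))\<^sup>2 /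
            norm (fst z - snd z) powr (real DIM('a) + 2 * s)) \<partial>(lebesgue \<Otimes>\<^sub>M lebesgue)) < \<infinity>"
      using set_int_to_nn[OF gW] D0 unfolding D_def by simp
  qed
  have one: "set_integrable lebesgue \<Omega> (\<lambda>_. 1::real)"
    unfolding set_integrable_def using \<Omega>s emeasure_bounded_finite[OF b\<Omega>] o\<Omega>
    by (simp add: integrable_indicator_iff)
  have W1: "set_integrable lebesgue \<Omega> W"
    by (rule set_int_bound2[OF \<Omega>s one W2 Wm]) (simp add: abs_le_1_sq)
  have uW: "set_integrable lebesgue \<Omega> (\<lambda>x. u x * W x)"
    by (rule set_int_bound2[OF \<Omega>s u2 W2]) (use um Wm in measurable, simp add: prod_bound1)
  have vW: "set_integrable lebesgue \<Omega> (\<lambda>x. v x * W x)"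
    by (rule set_int_bound2[OF \<Omega>s v2 W2]) (use vm Wm in measurable, simp add: prod_bound1)
  have fW: "set_integrable lebesgue \<Omega> (\<lambda>x. f x * W x)" if f: "f \<in> Linf \<Omega>" for f
  proof -
    from f obtain B where fm: "f \<in> borel_measurable lebesgue" and B: "AE x in lebesgue. x \<in> \<Omega> \<longrightarrow> \<bar>f x\<bar> \<le> B"
      unfolding Linf_def by auto
    show ?thesis
    proof (rule set_int_bound2[OF \<Omega>s, where ga="\<lambda>x. \<bar>B\<bar> * 1" and gb="\<lambda>x. \<bar>B\<bar> * (W x)^2"])
      show "set_integrable lebesgue \<Omega> (\<lambda>x. \<bar>B\<bar> * 1)" using one by (rule set_integrable_mult_right)
      show "set_integrable lebesgue \<Omega> (\<lambda>x. \<bar>B\<bar> * (W x)^2)" using W2 by (rule set_integrable_mult_right)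
      show "(\<lambda>x. f x * W x) \<in> borel_measurable lebesgue" using fm Wm by measurable
      show "AE x in lebesgue. x \<in> \<Omega> \<longrightarrow> \<bar>f x * W x\<bar> \<le> \<bar>B\<bar> * 1 + \<bar>B\<bar> * (W x)\<^sup>2"
        using B
      proof eventually_elim
        case (elim x)
        show ?case
        proof
          assume "x \<in> \<Omega>"
          then have "\<bar>f x\<bar> \<le> \<bar>B\<bar>" using elim by auto
          then have "\<bar>f x\<bar> * \<bar>W x\<bar> \<le> \<bar>B\<bar> * (1 + (W x)^2)"
            by (intro mult_mono abs_le_1_sq) auto
          then show "\<bar>f x * W x\<bar> \<le> \<bar>B\<bar> * 1 + \<bar>B\<bar> * (W x)\<^sup>2" by (simp add: abs_mult algebra_simps)
        qed
      qed
    qed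
  qed
  have GuW: "set_integrable (lebesgue \<Otimes>\<^sub>M lebesgue) (Qset \<Omega>) (\<lambda>z. (u (fst z) - u (snd z)) * (W (fst z) - W (snd z)) / D z)"
    by (rule set_int_bound2[OF Qs gu gW])
      (use comp_fst_meas[OF um] comp_snd_meas[OF um] comp_fst_meas[OF Wm] comp_snd_meas[OF Wm] Dm in measurable,
       intro AE_I2 impI, rule prod_bound[OF D0])
  have GvW: "set_integrable (lebesgue \<Otimes>\<^sub>M lebesgue) (Qset \<Omega>) (\<lambda>z. (v (fst z) - v (snd z)) * (W (fst z) - W (snd z)) / D z)"
    by (rule set_int_bound2[OF Qs gv gW])
      (use comp_fst_meas[OF vm] comp_snd_meas[OF vm] comp_fst_meas[OF Wm] comp_snd_meas[OF Wm] Dm in measurable,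
       intro AE_I2 impI, rule prod_bound[OF D0])
  define c where "c = frac_const DIM('a) s"
  have c0: "0 \<le> c" unfolding c_def using s by (rule frac_const_nonneg)
  define GU where "GU = (LINT z:Qset \<Omega>|(lebesgue \<Otimes>\<^sub>M lebesgue). (u (fst z) - u (snd z)) * (W (fst z) - W (snd z)) / D z)"
  define GV where "GV = (LINT z:Qset \<Omega>|(lebesgue \<Otimes>\<^sub>M lebesgue). (v (fst z) - v (snd z)) * (W (fst z) - W (snd z)) / D z)"
  define PU where "PU = (LINT x:\<Omega>|lebesgue. u x powr (-q) * W x)"
  define PV where "PV = (LINT x:\<Omega>|lebesgue. v x powr (-q) * W x)"
  define AU where "AU = (LINT x:\<Omega>|lebesgue. u x * W x)"
  define AV where "AV = (LINT x:\<Omega>|lebesgue. v x * W x)"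
  define FU where "FU = (LINT x:\<Omega>|lebesgue. f1 x * W x)"
  define FV where "FV = (LINT x:\<Omega>|lebesgue. f2 x * W x)"
  have wu': "\<forall>\<phi> \<in> X0 s \<Omega>.
        set_integrable lebesgue \<Omega> (\<lambda>x. u x powr (-q) * \<phi> x) \<and>
        (LINT x:\<Omega>|lebesgue. u x * \<phi> x)
        + lam * (frac_const DIM('a) s *
              (LINT z:Qset \<Omega>|(lebesgue \<Otimes>\<^sub>M lebesgue).
                 (u (fst z) - u (snd z)) * (\<phi> (fst z) - \<phi> (snd z))
                 / norm (fst z - snd z) powr (real DIM('a) + 2 * s))
            - (LINT x:\<Omega>|lebesgue. u x powr (-q) * \<phi> x))
        = (LINT x:\<Omega>|lebesgue. f1 x * \<phi> x)"
    using wu unfolding weak_solution_def by (elim conjE)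
  have wv': "\<forall>\<phi> \<in> X0 s \<Omega>.
        set_integrable lebesgue \<Omega> (\<lambda>x. v x powr (-q) * \<phi> x) \<and>
        (LINT x:\<Omega>|lebesgue. v x * \<phi> x)
        + lam * (frac_const DIM('a) s *
              (LINT z:Qset \<Omega>|(lebesgue \<Otimes>\<^sub>M lebesgue).
                 (v (fst z) - v (snd z)) * (\<phi> (fst z) - \<phi> (snd z))
                 / norm (fst z - snd z) powr (real DIM('a) + 2 * s))
            - (LINT x:\<Omega>|lebesgue. v x powr (-q) * \<phi> x))
        = (LINT x:\<Omega>|lebesgue. f2 x * \<phi> x)"
    using wv unfolding weak_solution_def by (elim conjE)
  have pu: "set_integrable lebesgue \<Omega> (\<lambda>x. u x powr (-q) * W x)"
    using conjunct1[OF bspec[OF wu' WX]] .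
  have eqU: "AU + lam * (c * GU - PU) = FU"
    using conjunct2[OF bspec[OF wu' WX]] unfolding AU_def GU_def PU_def FU_def c_def D_def .
  have pv: "set_integrable lebesgue \<Omega> (\<lambda>x. v x powr (-q) * W x)"
    using conjunct1[OF bspec[OF wv' WX]] .
  have eqV: "AV + lam * (c * GV - PV) = FV"
    using conjunct2[OF bspec[OF wv' WX]] unfolding AV_def GV_def PV_def FV_def c_def D_def .
  have h1: "GV \<le> GU" unfolding GU_def GV_def
    by (rule set_integral_mono[OF GvW GuW]) (unfold W_def, rule mono_aux[OF D0])
  have h2: "PU \<le> PV" unfolding PU_def PV_def
  proof (rule set_integral_mono_AE[OF pu pv])
    show "AE x\<in>\<Omega> in lebesgue. u x powr - q * W x \<le> v x powr - q * W x"
      using vpos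
    proof eventually_elim
      case (elim x)
      show ?case
      proof
        assume "x \<in> \<Omega>"
        then have "0 < v x" using elim by blast
        then show "u x powr - q * W x \<le> v x powr - q * W x" unfolding W_def by (rule powr_aux[OF _ C(1) q])
      qed
    qed
  qed
  have h3: "FU - FV \<le> C * (LINT x:\<Omega>|lebesgue. W x)"
  proof -
    have "FU - FV = (LINT x:\<Omega>|lebesgue. f1 x * W x - f2 x * W x)"
      unfolding FU_def FV_def using fW[OF f1] fW[OF f2] by simp
    also have "\<dots> \<le> (LINT x:\<Omega>|lebesgue. C * W x)"
    proof (rule set_integral_mono_AE)
      show "set_integrable lebesgue \<Omega> (\<lambda>x. f1 x * W x - f2 x * W x)" using fW[OF f1] fW[OF f2] by auto
      show "set_integrable lebesgue \<Omega> (\<lambda>x. C * W x)" using W1 by simp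
      show "AE x\<in>\<Omega> in lebesgue. f1 x * W x - f2 x * W x \<le> C * W x"
        using C(2)
      proof eventually_elim
        case (elim x)
        show ?case
        proof
          assume "x \<in> \<Omega>"
          then have "f1 x - f2 x \<le> C" using elim by auto
          then have "(f1 x - f2 x) * W x \<le> C * W x" by (intro mult_right_mono) (auto simp: W_def)
          then show "f1 x * W x - f2 x * W x \<le> C * W x" by (simp add: algebra_simps)
        qed
      qed
    qed
    also have "\<dots> = C * (LINT x:\<Omega>|lebesgue. W x)" by simp
    finally show ?thesis .
  qed
  have CW: "set_integrable lebesgue \<Omega> (\<lambda>x. C * W x)" using W1 by (rule set_integrable_mult_right)
  have uvW: "set_integrable lebesgue \<Omega> (\<lambda>x. u x * W x - v x * W x)" by (rule set_integral_diff(1)[OF uW vW])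
  have e1: "(LINT x:\<Omega>|lebesgue. u x * W x - v x * W x - C * W x)
      = (LINT x:\<Omega>|lebesgue. u x * W x - v x * W x) - (LINT x:\<Omega>|lebesgue. C * W x)"
    by (rule set_integral_diff(2)[OF uvW CW])
  have e2: "(LINT x:\<Omega>|lebesgue. u x * W x - v x * W x) = AU - AV"
    unfolding AU_def AV_def by (rule set_integral_diff(2)[OF uW vW])
  have e3: "(LINT x:\<Omega>|lebesgue. C * W x) = C * (LINT x:\<Omega>|lebesgue. W x)"
    by (rule set_integral_mult_right)
  have e4: "(\<lambda>x. u x * W x - v x * W x - C * W x) = (\<lambda>x. (W x)^2)"
    unfolding W_def by (rule ext) (rule sq_aux)
  have h4: "AU - AV - C * (LINT x:\<Omega>|lebesgue. W x) = (LINT x:\<Omega>|lebesgue. (W x)^2)"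
    using e1 e2 e3 unfolding e4 by linarith
  have m1: "lam * (c * (GU - GV)) \<ge> 0" using lam c0 h1 by (intro mult_nonneg_nonneg) auto
  have m2: "lam * (PU - PV) \<le> 0" using lam h2 by (intro mult_nonneg_nonpos) auto
  have m3: "lam * (c * GU - PU) - lam * (c * GV - PV) = lam * (c * (GU - GV)) - lam * (PU - PV)"
    by (simp add: algebra_simps)
  have le0: "(LINT x:\<Omega>|lebesgue. (W x)^2) \<le> 0" using h3 h4 m1 m2 m3 eqU eqV by linarith
  have int2: "integrable lebesgue (\<lambda>x. indicator \<Omega> x *\<^sub>R (W x)^2)" using W2 unfolding set_integrable_def .
  have nn: "AE x in lebesgue. 0 \<le> indicator \<Omega> x *\<^sub>R (W x)^2"
    by (rule AE_I2) (simp add: indicator_def)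
  have ge0: "0 \<le> integral\<^sup>L lebesgue (\<lambda>x. indicator \<Omega> x *\<^sub>R (W x)^2)"
    by (rule integral_nonneg_AE[OF nn])
  have z: "integral\<^sup>L lebesgue (\<lambda>x. indicator \<Omega> x *\<^sub>R (W x)^2) = 0"
    using le0 ge0 unfolding set_lebesgue_integral_def by linarith
  have "AE x in lebesgue. indicator \<Omega> x *\<^sub>R (W x)^2 = 0"
    by (rule iffD1[OF integral_nonneg_eq_0_iff_AE[OF int2 nn] z])
  then show ?thesis
  proof eventually_elim
    case (elim x)
    show ?case
    proof
      assume "x \<in> \<Omega>"
      then have "indicator \<Omega> x = (1::real)" by (rule indicator_simps(1))
      with elim have "(W x)^2 = 0" by (metis scaleR_one)
      then have w0: "W x = 0" using power_eq_0_iff by blast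
      have "u x - v x - C \<le> W x" unfolding W_def by (rule max.cobounded2)
      with w0 show "u x - v x \<le> C" by linarith
    qed
  qed
qed


theorem mainTheorem6:
  fixes \<Omega> :: "'a::euclidean_space set" and s q lam r :: real
    and f1 f2 u v :: "'a \<Rightarrow> real"
  assumes "0 < s" "s < 1" "real DIM('a) > 2 * s"
    and "open \<Omega>" "bounded \<Omega>" "C2_boundary \<Omega>"
    and "r > diameter \<Omega>"
    and "q > 0" "q * (2 * s - 1) < 2 * s + 1" "lam > 0"
    and "f1 \<in> Linf \<Omega>" "f2 \<in> Linf \<Omega>"
    and "u \<in> X0 s \<Omega> \<inter> classC s q r \<Omega> \<inter> C0_closure \<Omega>"
    and "v \<in> X0 s \<Omega> \<inter> classC s q r \<Omega> \<inter> C0_closure \<Omega>"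
    and "weak_solution s q lam \<Omega> f1 u" "weak_solution s q lam \<Omega> f2 v"
  shows "Linf_norm \<Omega> (\<lambda>x. u x - v x) \<le> Linf_norm \<Omega> (\<lambda>x. f1 x - f2 x)"
proof -
  define S where "S = {C. 0 \<le> C \<and> (AE x in lebesgue. x \<in> \<Omega> \<longrightarrow> \<bar>f1 x - f2 x\<bar> \<le> C)}"
  obtain B1 where B1: "AE x in lebesgue. x \<in> \<Omega> \<longrightarrow> \<bar>f1 x\<bar> \<le> B1" using assms(11) unfolding Linf_def by auto
  obtain B2 where B2: "AE x in lebesgue. x \<in> \<Omega> \<longrightarrow> \<bar>f2 x\<bar> \<le> B2" using assms(12) unfolding Linf_def by auto
  have "AE x in lebesgue. x \<in> \<Omega> \<longrightarrow> \<bar>f1 x - f2 x\<bar> \<le> \<bar>B1\<bar> + \<bar>B2\<bar>"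
    using B1 B2 by eventually_elim auto
  then have ne: "S \<noteq> {}" unfolding S_def by force
  have le: "Linf_norm \<Omega> (\<lambda>x. u x - v x) \<le> C" if CS: "C \<in> S" for C
  proof -
    have C0: "0 \<le> C" and CA: "AE x in lebesgue. x \<in> \<Omega> \<longrightarrow> \<bar>f1 x - f2 x\<bar> \<le> C" using CS unfolding S_def by auto
    have CA': "AE x in lebesgue. x \<in> \<Omega> \<longrightarrow> \<bar>f2 x - f1 x\<bar> \<le> C" using CA by eventually_elim (simp add: abs_minus_commute)
    have a1: "AE x in lebesgue. x \<in> \<Omega> \<longrightarrow> u x - v x \<le> C"
      by (rule one_side[OF assms(1,2,8,4,5,10,11,12,15,16) C0 CA])
    have a2: "AE x in lebesgue. x \<in> \<Omega> \<longrightarrow> v x - u x \<le> C"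
      by (rule one_side[OF assms(1,2,8,4,5,10,12,11,16,15) C0 CA'])
    have "AE x in lebesgue. x \<in> \<Omega> \<longrightarrow> \<bar>u x - v x\<bar> \<le> C" using a1 a2 by eventually_elim auto
    then have mem: "C \<in> {C. 0 \<le> C \<and> (AE x in lebesgue. x \<in> \<Omega> \<longrightarrow> \<bar>u x - v x\<bar> \<le> C)}" using C0 by blast
    have bdd: "bdd_below {C. 0 \<le> C \<and> (AE x in lebesgue. x \<in> \<Omega> \<longrightarrow> \<bar>u x - v x\<bar> \<le> C)}"
      by (rule bdd_belowI[where m=0]) blast
    show ?thesis unfolding Linf_norm_def by (rule cInf_lower[OF mem bdd])
  qed
  have "Linf_norm \<Omega> (\<lambda>x. f1 x - f2 x) = Inf S" unfolding Linf_norm_def S_def by simp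
  then show ?thesis using cInf_greatest[OF ne le] by simp
qed

end
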